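(* Let $n\ge 1$ be an integer and $x\in\mathbb{R}$, and let $z_1(x),\ldots,z_n(x)$ be the zeros (listed with multiplicity) of the normalized associated Legendre function $\psi_n(x,z)=\Gamma(1-z)P_n^z(\tanh x)$ with respect to $z$, as defined in the context. Then for each $\ell=1,\ldots,n$, $$\prod_{j=1}^n \bigl(\ell - z_j(x)\bigr) = (-1)^{n-\ell}\, e^{-2\ell x}\prod_{j=1}^n \bigl(\ell + z_j(x)\bigr),$$ i.e. whenever the denominators are nonzero, $$\prod_{j=1}^n \frac{\ell-z_j(x)}{\ell+z_j(x)} = (-1)^{n-\ell}\exp(-2\ell x),\qquad \ell=1,\ldots,n.$$
   Context: Fix an integer $n\ge1$. For $x\in\mathbb{R}$ and $z\in\mathbb{C}\setminus\{1,\ldots,n\}$ define $$\psi_n(x,z)=\frac{e^{zx}}{(1+e^{-2x})^n}\sum_{m=0}^n e^{-2mx}\binom{n}{m}\prod_{j=1}^m\frac{z+n+1-j}{z-j},$$ which equals $\Gamma(1-z)P_n^z(\tanh x)$, where $P_n^z$ is the associated Legendre function of degree $n$ and order $z$ and $\Gamma$ is the Euler gamma function. For each $x$, the polynomial $Q_x(z)=\sum_{m=0}^n e^{-2mx}\binom{n}{m}\prod_{j=1}^m(z+n+1-j)\prod_{k=m+1}^n(z-k)$ has degree $n$ with leading coefficient $(1+e^{-2x})^n$; its roots (with multiplicity) are denoted $z_1(x),\ldots,z_n(x)$, so that $\psi_n(x,z)=\frac{e^{zx}}{(1+e^{-2x})^n}\prod_{j=1}^n\frac{z-z_j(x)}{z-j}$.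 These are called the zeros of $\psi_n(x,\cdot)$. *)

theory Defs
  imports "HOL-Analysis.Analysis" "HOL-Computational_Algebra.Polynomial"
begin

definition Qpoly :: "nat \<Rightarrow> real \<Rightarrow> complex poly" where
  "Qpoly n x = (\<Sum>m\<in>{0..n}.
     smult (complex_of_real (exp (-2 * real m * x)) * of_nat (n choose m))
       ((\<Prod>j\<in>{1..m}. [: of_nat (n + 1 - j), 1 :]) *
        (\<Prod>k\<in>{m+1..n}. [: - of_nat k, 1 :])))"

text \<open>zs is the list of zeros of psi_n(x,.), i.e. of Q_x, listed with multiplicity:
  Q_x(z) = (1 + e^{-2x})^n * prod_j (z - z_j).\<close>
definition is_zero_list :: "nat \<Rightarrow> real \<Rightarrow> complex list \<Rightarrow> bool" where
  "is_zero_list n x zs \<longleftrightarrow> length zs = n \<and>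
     Qpoly n x = smult (complex_of_real ((1 + exp (-2 * x)) ^ n))
                   (\<Prod>z\<leftarrow>zs. [: - z, 1 :])"

end

theory Submission imports Defs begin
lemma P1: "m \<le> a \<Longrightarrow> (\<Prod>j\<in>{1..m}. (of_nat a + 1 - of_nat j :: complex)) = fact a / fact (a - m)"
proof (induction m)
  case 0 then show ?case by simp
next
  case (Suc m)
  have e: "a - m = Suc (a - Suc m)" using Suc by simp
  then have f: "fact (a - m) = (of_nat (a - m) :: complex) * fact (a - Suc m)" by (metis fact_Suc)
  have g: "of_nat a + 1 - of_nat (Suc m) = (of_nat (a-m)::complex)" using Suc(2) by (simp add: of_nat_diff)
  have nz: "(of_nat (a-m)::complex) \<noteq> 0" using Suc(2) by simp
  have "(\<Prod>j\<in>{1..Suc m}. (of_nat a + 1 - of_nat j :: complex)) = fact a / fact (a - m) * (of_nat a + 1 - of_nat (Suc m))"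
    using Suc by (simp add: prod.nat_ivl_Suc')
  also have "\<dots> = fact a / fact (a - Suc m)" unfolding g f using nz by simp
  finally show ?case .
qed
lemma P2: "m \<le> n \<Longrightarrow> b \<le> m \<Longrightarrow> (\<Prod>k\<in>{m+1..n}. (of_nat k - of_nat b :: complex)) = fact (n - b) / fact (m - b)"
proof (induction n rule: dec_induct)
  case base then show ?case by simp
next
  case (step n)
  have "Suc n - b = Suc (n - b)" using step by simp
  then have f: "fact (Suc n - b) = (of_nat (Suc n - b) :: complex) * fact (n - b)" by (metis fact_Suc)
  have "{m+1..Suc n} = insert (Suc n) {m+1..n}" using step by auto
  then have "(\<Prod>k\<in>{m+1..Suc n}. (of_nat k - of_nat b :: complex)) = (of_nat (Suc n) - of_nat b) * (fact (n - b) / fact (m - b))"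
    using step by simp
  also have "\<dots> = fact (Suc n - b) / fact (m - b)" using step by (simp add: f of_nat_diff)
  finally show ?case .
qed
lemma P3: "m \<le> n \<Longrightarrow> (\<Prod>k\<in>{m+1..n}. (of_nat k + of_nat b :: complex)) = fact (n + b) / fact (m + b)"
proof (induction n rule: dec_induct)
  case base then show ?case by simp
next
  case (step n)
  have f: "fact (Suc n + b) = (of_nat (Suc n + b) :: complex) * fact (n + b)" by (metis add_Suc fact_Suc)
  have "{m+1..Suc n} = insert (Suc n) {m+1..n}" using step by auto
  then have "(\<Prod>k\<in>{m+1..Suc n}. (of_nat k + of_nat b :: complex)) = (of_nat (Suc n) + of_nat b) * (fact (n + b) / fact (m + b))"
    using step by simp
  also have "\<dots> = fact (Suc n + b) / fact (m + b)" unfolding f by simp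
  finally show ?case .
qed
definition T :: "nat \<Rightarrow> complex \<Rightarrow> nat \<Rightarrow> complex" where
  "T n z m = of_nat (n choose m) * (\<Prod>j\<in>{1..m}. of_nat (n+1-j) + z) * (\<Prod>k\<in>{m+1..n}. - of_nat k + z)"

lemma polyQ: "poly (Qpoly n x) z = (\<Sum>m\<in>{0..n}. complex_of_real (exp (-2 * real m * x)) * T n z m)"
  unfolding Qpoly_def T_def by (simp add: poly_sum poly_prod mult.assoc)

lemma T_zero1: assumes "m < l" "l \<le> n" shows "T n (of_nat l) m = 0"
proof -
  have "(\<Prod>k\<in>{m+1..n}. - of_nat k + (of_nat l::complex)) = 0"
    using assms by (subst prod_zero_iff) (auto intro!: bexI[of _ l])
  then show ?thesis unfolding T_def by simp
qed

lemma T_zero2: assumes "n - l < m" "1 \<le> l" "l \<le> n" "m \<le> n" shows "T n (- of_nat l) m = 0"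
proof -
  have "(\<Prod>j\<in>{1..m}. of_nat (n+1-j) + - (of_nat l::complex)) = 0"
    using assms by (subst prod_zero_iff) (auto intro!: bexI[of _ "n+1-l"] simp: of_nat_diff)
  then show ?thesis unfolding T_def by simp
qed

lemma T_rel: assumes "m \<le> n - l" "l \<le> n"
  shows "T n (of_nat l) (m+l) = (-1)^l * T n (- of_nat l) m"
proof -
  define N where "N = n - m - l"
  have nm: "n - m = N + l" "n - (m+l) = N" "n - l - m = N" using assms by (auto simp: N_def)
  have a1: "(\<Prod>j\<in>{1..m+l}. of_nat (n+1-j) + (of_nat l::complex)) = fact (n+l) / fact (n - m)"
  proof -
    have "(\<Prod>j\<in>{1..m+l}. of_nat (n+1-j) + (of_nat l::complex)) = (\<Prod>j\<in>{1..m+l}. of_nat (n+l) + 1 - of_nat j)"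
      using assms by (intro prod.cong) (auto simp: of_nat_diff)
    also have "\<dots> = fact (n+l) / fact (n+l-(m+l))" using assms by (intro P1) auto
    finally show ?thesis by simp
  qed
  have a2: "(\<Prod>k\<in>{m+l+1..n}. - of_nat k + (of_nat l::complex)) = (-1)^N * (fact (n-l) / fact m)"
  proof -
    have "(\<Prod>k\<in>{m+l+1..n}. - of_nat k + (of_nat l::complex)) = (\<Prod>k\<in>{m+l+1..n}. (-1) * (of_nat k - of_nat l))"
      by (intro prod.cong) auto
    also have "\<dots> = (-1)^N * (\<Prod>k\<in>{m+l+1..n}. (of_nat k - of_nat l))"
      unfolding prod.distrib by (simp add: nm)
    also have "(\<Prod>k\<in>{m+l+1..n}. (of_nat k - (of_nat l::complex))) = fact (n-l) / fact (m+l-l)"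
      using assms by (intro P2) auto
    finally show ?thesis by simp
  qed
  have b1: "(\<Prod>j\<in>{1..m}. of_nat (n+1-j) + - (of_nat l::complex)) = fact (n-l) / fact N"
  proof -
    have "(\<Prod>j\<in>{1..m}. of_nat (n+1-j) + - (of_nat l::complex)) = (\<Prod>j\<in>{1..m}. of_nat (n-l) + 1 - of_nat j)"
      using assms by (intro prod.cong) (auto simp: of_nat_diff)
    also have "\<dots> = fact (n-l) / fact (n-l-m)" using assms by (intro P1) auto
    finally show ?thesis by (simp only: nm)
  qed
  have b2: "(\<Prod>k\<in>{m+1..n}. - of_nat k + - (of_nat l::complex)) = (-1)^(N+l) * (fact (n+l) / fact (m+l))"
  proof -
    have "(\<Prod>k\<in>{m+1..n}. - of_nat k + - (of_nat l::complex)) = (\<Prod>k\<in>{m+1..n}. (-1) * (of_nat k + of_nat l))"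
      by (intro prod.cong) auto
    also have "\<dots> = (-1)^(N+l) * (\<Prod>k\<in>{m+1..n}. (of_nat k + of_nat l))"
      unfolding prod.distrib by (simp add: nm)
    also have "(\<Prod>k\<in>{m+1..n}. (of_nat k + (of_nat l::complex))) = fact (n+l) / fact (m+l)"
      using assms by (intro P3) auto
    finally show ?thesis by simp
  qed
  have c1: "(of_nat (n choose (m+l)) :: complex) = fact n / (fact (m+l) * fact N)"
    using assms by (subst binomial_fact) (auto simp: nm)
  have c2: "(of_nat (n choose m) :: complex) = fact n / (fact m * fact (N+l))"
    using assms by (subst binomial_fact) (auto simp: nm)
  show ?thesis unfolding T_def a1 a2 b1 b2 c1 c2 nm
    by (simp add: power_add field_simps)
qed
lemma Q_shift: assumes "1 \<le> l" "l \<le> n"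
  shows "poly (Qpoly n x) (of_nat l) = (-1)^l * complex_of_real (exp (-2 * real l * x)) * poly (Qpoly n x) (- of_nat l)"
proof -
  let ?e = "\<lambda>m. complex_of_real (exp (-2 * real m * x))"
  have "poly (Qpoly n x) (of_nat l) = (\<Sum>m\<in>{l..n}. ?e m * T n (of_nat l) m)"
    unfolding polyQ using assms by (intro sum.mono_neutral_right) (auto simp: T_zero1)
  also have "\<dots> = (\<Sum>m\<in>{0+l..(n-l)+l}. ?e m * T n (of_nat l) m)" using assms by simp
  also have "\<dots> = (\<Sum>m\<in>{0..n-l}. ?e (m+l) * T n (of_nat l) (m+l))"
    by (rule sum.shift_bounds_cl_nat_ivl)
  also have "\<dots> = (\<Sum>m\<in>{0..n-l}. (-1)^l * ?e l * (?e m * T n (- of_nat l) m))"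
  proof (intro sum.cong refl)
    fix m assume "m \<in> {0..n-l}"
    then have "?e (m+l) = ?e l * ?e m"
    proof -
      have "exp (-2 * real (m+l) * x) = exp (-2 * real l * x) * exp (-2 * real m * x)"
        by (simp add: algebra_simps flip: exp_add)
      then show ?thesis by (simp only: of_real_mult)
    qed
    then show "?e (m+l) * T n (of_nat l) (m+l) = (-1)^l * ?e l * (?e m * T n (- of_nat l) m)"
      using \<open>m \<in> {0..n-l}\<close> assms by (simp add: T_rel)
  qed
  also have "\<dots> = (-1)^l * ?e l * (\<Sum>m\<in>{0..n-l}. ?e m * T n (- of_nat l) m)"
    by (simp add: sum_distrib_left)
  also have "(\<Sum>m\<in>{0..n-l}. ?e m * T n (- of_nat l) m) = poly (Qpoly n x) (- of_nat l)"
    unfolding polyQ using assms by (intro sum.mono_neutral_left) (auto simp: T_zero2)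
  finally show ?thesis .
qed

lemma poly_lin_prod: "poly (\<Prod>z\<leftarrow>zs. [: - z, 1 :]) (w::complex) = (\<Prod>z\<leftarrow>zs. w - z)"
  by (induction zs) (auto simp: algebra_simps)

lemma prod_neg: "(\<Prod>z\<leftarrow>zs. (a::complex) + z) = (-1)^length zs * (\<Prod>z\<leftarrow>zs. - a - z)"
  by (induction zs) (auto simp: algebra_simps)

theorem proposition1:
  fixes n :: nat and x :: real and zs :: "complex list" and l :: nat
  assumes "n \<ge> 1"
    and "is_zero_list n x zs"
    and "1 \<le> l" and "l \<le> n"
  shows "(\<Prod>z\<leftarrow>zs. of_nat l - z)
       = (-1) ^ (n - l) * complex_of_real (exp (-2 * real l * x)) * (\<Prod>z\<leftarrow>zs. of_nat l + z)"
proof -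
  define c where "c = complex_of_real ((1 + exp (-2 * x)) ^ n)"
  have c0: "c \<noteq> 0" unfolding c_def
    by (metis add_pos_pos exp_gt_zero less_irrefl of_real_eq_0_iff zero_less_one zero_less_power)
  have len: "length zs = n" and Q: "\<And>w. poly (Qpoly n x) w = c * (\<Prod>z\<leftarrow>zs. w - z)"
    using assms(2) unfolding is_zero_list_def c_def by (auto simp: poly_lin_prod)
  have s: "(-1::complex)^(n-l) * (-1)^n = (-1)^l"
  proof -
    have "n = (n - l) + l" using assms by simp
    then have "(-1::complex)^(n-l) * (-1)^n = ((-1)^(n-l))^2 * (-1)^l"
      by (metis (no_types) power2_eq_square power_add mult.assoc)
    then show ?thesis by (simp flip: power_mult power_mult_distrib add: mult.commute[of 2])
  qed
  have "c * (\<Prod>z\<leftarrow>zs. of_nat l - z) = (-1)^l * complex_of_real (exp (-2 * real l * x)) * (c * (\<Prod>z\<leftarrow>zs. - of_nat l - z))"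
    using Q_shift[OF assms(3,4), of x] by (simp add: Q)
  then have "(\<Prod>z\<leftarrow>zs. of_nat l - z) = (-1)^l * complex_of_real (exp (-2 * real l * x)) * (\<Prod>z\<leftarrow>zs. - of_nat l - z)"
    using c0 by (simp add: algebra_simps)
  also have "\<dots> = (-1) ^ (n - l) * complex_of_real (exp (-2 * real l * x)) * (\<Prod>z\<leftarrow>zs. of_nat l + z)"
    unfolding prod_neg[of "of_nat l" zs] len using s by (simp add: algebra_simps flip: s)
  finally show ?thesis .
qed

end
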